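(* Let $\epsilon'$ be obtained from $\epsilon$ by removing the entry $\epsilon_i$ (if $n=4$, assume $\epsilon'$ homogeneous), and let $\mathcal V'=\mathfrak{tr}^\epsilon_{\epsilon'}(\mathcal V)$. Then (1) $\mathcal V'$ is stable under the action of $\mathring{\mathcal U}(\epsilon')$ via $\phi$ and is isomorphic to the natural representation of $\mathring{\mathcal U}(\epsilon')$; (2) $\mathfrak{tr}^\epsilon_{\epsilon'}(\mathcal V^{\otimes\ell})$ is isomorphic to $\mathcal V'^{\otimes\ell}$ as a $\mathring{\mathcal U}(\epsilon')$-module, for every $\ell\ge1$.
   Context: Fix $n\ge 4$, $\epsilon\in\{0,1\}^n$. For $\epsilon^\ast\in\{0,1\}^k$: $\mathbb I=\{1,\dots,k\}$, $\alpha_i=\delta_i-\delta_{i+1}$, $\langle\alpha_i,\delta_j^\vee\rangle$ the coefficient of $\delta_j$ in $\alpha_i$, $I_{\rm even}=\{i:\epsilon^\ast_i=\epsilon^\ast_{i+1}\}$, $I_{\rm odd}$ its complement, $[2]=q+q^{-1}$, $q_j=q$ if $\epsilon^\ast_j=0$, $q_j=-q^{-1}$ if $\epsilon^\ast_j=1$. $\mathring{\mathcal U}(\epsilon^\ast)$ is generated over $\mathbb Q(q)$ by pairwise commuting invertible $\omega_j$ ($j\in\mathbb I$) and $e_i,f_i$ ($1\le i\le k-1$) with relations $\omega_je_i\omega_j^{-1}=q_j^{\langle\alpha_i,\delta_j^\vee\rangle}e_i$, $\omega_jf_i\omega_j^{-1}=q_j^{-\langle\alpha_i,\delta_j^\vee\rangle}f_i$,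 $e_if_j-f_je_i=\delta_{ij}(k_i-k_i^{-1})/(q-q^{-1})$, $k_i=\omega_i\omega_{i+1}^{-1}$, $e_i^2=f_i^2=0$ ($i\in I_{\rm odd}$) and Serre-type relations ($e_ie_j=e_je_i$ for $|i-j|>1$; $e_i^2e_j-(-1)^{\epsilon^\ast_i}[2]e_ie_je_i+e_je_i^2=0$ for $i\in I_{\rm even}$, $|i-j|=1$; $e_ie_{i-1}e_ie_{i+1}-e_ie_{i+1}e_ie_{i-1}+e_{i+1}e_ie_{i-1}e_i-e_{i-1}e_ie_{i+1}e_i+(-1)^{\epsilon^\ast_i}[2]e_ie_{i-1}e_{i+1}e_i=0$ for $i\in I_{\rm odd}$; same for $f$). Tensor products use $\Delta(\omega_j)=\omega_j\otimes\omega_j$, $\Delta(e_i)=e_i\otimes1+k_i^{-1}\otimes e_i$, $\Delta(f_i)=f_i\otimes k_i+1\otimes f_i$. The natural representation $\mathcal V$ of $\mathring{\mathcal U}(\epsilon^\ast)$ is $\bigoplus_{j\in\mathbb I}\mathbb Q(q)v_j$ with $\omega_iv_j=q_i^{\delta_{ij}}v_j$, $e_kv_j=\delta_{k,j-1}v_{j-1}$, $f_kv_j=\delta_{kj}v_{j+1}$. Action via $\phi$: $\mathring{\mathcal U}(\epsilon')$ (generators $\omega'_l$, $1\le l\le n-1$, and $e'_j,f'_j$, $1\le j\le n-2$) acts on $\mathring{\mathcal U}(\epsilon)$-modules through $\omega'_l\mapsto\omega_l$ ($l<i$), $\omega_{l+1}$ ($l\ge i$), $e'_j\mapsto E_j$,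 $f'_j\mapsto F_j$ where: if $2\le i\le n-1$, $E_j=e_j,F_j=f_j$ ($j\le i-2$), $E_{i-1}=e_{i-1}e_i-D\,e_ie_{i-1}$, $F_{i-1}=f_if_{i-1}-D^{-1}f_{i-1}f_i$ with $D=q_{i-1}^{\langle\alpha_i,\delta_{i-1}^\vee\rangle}q_i^{-\langle\alpha_i,\delta_i^\vee\rangle}$, and $E_j=e_{j+1},F_j=f_{j+1}$ ($j\ge i$); if $i=n$, $E_j=e_j,F_j=f_j$; if $i=1$, $E_j=e_{j+1},F_j=f_{j+1}$. Truncation: for a $\mathring{\mathcal U}(\epsilon)$-submodule $V$ of a tensor power of $\mathcal V$, with weight spaces $V_\mu=\{u:\omega_ju=q_j^{\mu_j}u\}$, $\mu=\sum\mu_j\delta_j$, $\mathfrak{tr}^\epsilon_{\epsilon'}(V)=\bigoplus_{\mu:\ \mu_i=0}V_\mu$ (where $i$ is the removed position). *)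

theory Defs
  imports "HOL-Computational_Algebra.Polynomial" "HOL-Computational_Algebra.Fraction_Field"
begin

type_synonym qf = "rat poly fract"

definition qq :: qf where "qq = Fract [:0, 1:] 1"

section \<open>Parity sequences (entries 0/1, 1-based indexing)\<close>

definition eps_at :: "nat list \<Rightarrow> nat \<Rightarrow> nat" where
  "eps_at eps j = eps ! (j - 1)"

definition valid_eps :: "nat list \<Rightarrow> bool" where
  "valid_eps eps \<longleftrightarrow> set eps \<subseteq> {0, 1}"

definition homogeneous :: "nat list \<Rightarrow> bool" where
  "homogeneous eps \<longleftrightarrow> (\<forall>a\<in>set eps. \<forall>b\<in>set eps. a = b)"

definition remove_entry :: "nat list \<Rightarrow> nat \<Rightarrow> nat list" where
  "remove_entry eps i = take (i - 1) eps @ drop i eps"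

definition qj :: "nat list \<Rightarrow> nat \<Rightarrow> qf" where
  "qj eps j = (if eps_at eps j = 0 then qq else - inverse qq)"

text \<open>The pairing <alpha_i, delta_j^vee>: coefficient of delta_j in delta_i - delta_{i+1}.\<close>
definition pair :: "nat \<Rightarrow> nat \<Rightarrow> int" where
  "pair i j = (if j = i then 1 else if j = i + 1 then -1 else 0)"

text \<open>Vectors are coordinate functions 'x => Q(q); a representation of U(eps*)
  (eps* of length k) is a carrier together with operators for omega_j (1<=j<=k),
  e_i, f_i (1<=i<=k-1).\<close>

record 'x rep =
  car :: "('x \<Rightarrow> qf) set"
  om  :: "nat \<Rightarrow> ('x \<Rightarrow> qf) \<Rightarrow> ('x \<Rightarrow> qf)"
  ee  :: "nat \<Rightarrow> ('x \<Rightarrow> qf) \<Rightarrow> ('x \<Rightarrow> qf)"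
  ff  :: "nat \<Rightarrow> ('x \<Rightarrow> qf) \<Rightarrow> ('x \<Rightarrow> qf)"

text \<open>M a b = coefficient of v_a in M v_b.\<close>
type_synonym mat = "nat \<Rightarrow> nat \<Rightarrow> qf"

definition id_mat :: mat where
  "id_mat a b = (if a = b then 1 else 0)"

definition om_diag :: "nat list \<Rightarrow> nat \<Rightarrow> nat \<Rightarrow> qf" where
  "om_diag eps j b = qj eps j powi (if j = b then 1 else 0)"

definition om_mat :: "nat list \<Rightarrow> nat \<Rightarrow> mat" where
  "om_mat eps j a b = (if a = b then om_diag eps j b else 0)"

definition k_mat :: "nat list \<Rightarrow> nat \<Rightarrow> mat" where
  "k_mat eps i a b = (if a = b then om_diag eps i b * inverse (om_diag eps (i + 1) b) else 0)"

definition kinv_mat :: "nat list \<Rightarrow> nat \<Rightarrow> mat" where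
  "kinv_mat eps i a b = (if a = b then inverse (om_diag eps i b * inverse (om_diag eps (i + 1) b)) else 0)"

definition e_mat :: "nat \<Rightarrow> mat" where
  "e_mat i a b = (if b = i + 1 \<and> a = i then 1 else 0)"

definition f_mat :: "nat \<Rightarrow> mat" where
  "f_mat i a b = (if b = i \<and> a = i + 1 then 1 else 0)"

definition nat_space :: "nat \<Rightarrow> (nat \<Rightarrow> qf) set" where
  "nat_space k = {v. \<forall>j. v j \<noteq> 0 \<longrightarrow> j \<in> {1..k}}"

definition mat_apply :: "nat \<Rightarrow> mat \<Rightarrow> (nat \<Rightarrow> qf) \<Rightarrow> (nat \<Rightarrow> qf)" where
  "mat_apply k M v = (\<lambda>a. if a \<in> {1..k} then (\<Sum>b = 1..k. M a b * v b) else 0)"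

definition natrep :: "nat list \<Rightarrow> nat rep" where
  "natrep eps = \<lparr> car = nat_space (length eps),
      om = (\<lambda>j. mat_apply (length eps) (om_mat eps j)),
      ee = (\<lambda>i. mat_apply (length eps) (e_mat i)),
      ff = (\<lambda>i. mat_apply (length eps) (f_mat i)) \<rparr>"

section \<open>Tensor powers: V^{\<otimes>l} with basis v_{w_1} \<otimes> ... \<otimes> v_{w_l}, w a word\<close>

definition words :: "nat \<Rightarrow> nat \<Rightarrow> nat list set" where
  "words k l = {w. length w = l \<and> set w \<subseteq> {1..k}}"

definition tens_space :: "nat \<Rightarrow> nat \<Rightarrow> (nat list \<Rightarrow> qf) set" where
  "tens_space k l = {u. \<forall>w. u w \<noteq> 0 \<longrightarrow> w \<in> words k l}"

definition tensor_op :: "nat \<Rightarrow> mat list \<Rightarrow> (nat list \<Rightarrow> qf) \<Rightarrow> (nat list \<Rightarrow> qf)" where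
  "tensor_op k Ms u = (\<lambda>w. if w \<in> words k (length Ms) then
      (\<Sum>w' \<in> words k (length Ms). (\<Prod>p < length Ms. (Ms ! p) (w ! p) (w' ! p)) * u w') else 0)"

text \<open>Iterated coproducts: Delta(omega) = omega \<otimes> omega,
  Delta(e_i) = e_i \<otimes> 1 + k_i^{-1} \<otimes> e_i, Delta(f_i) = f_i \<otimes> k_i + 1 \<otimes> f_i.\<close>
definition tensrep :: "nat list \<Rightarrow> nat \<Rightarrow> nat list rep" where
  "tensrep eps l = \<lparr> car = tens_space (length eps) l,
      om = (\<lambda>j. tensor_op (length eps) (replicate l (om_mat eps j))),
      ee = (\<lambda>i u. (\<lambda>w. \<Sum>p<l. tensor_op (length eps)
              (replicate p (kinv_mat eps i) @ [e_mat i] @ replicate (l - p - 1) id_mat) u w)),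
      ff = (\<lambda>i u. (\<lambda>w. \<Sum>p<l. tensor_op (length eps)
              (replicate p id_mat @ [f_mat i] @ replicate (l - p - 1) (k_mat eps i)) u w)) \<rparr>"

definition weight_space :: "nat list \<Rightarrow> 'x rep \<Rightarrow> (nat \<Rightarrow> int) \<Rightarrow> ('x \<Rightarrow> qf) set" where
  "weight_space eps R mu = {u \<in> car R. \<forall>j \<in> {1..length eps}.
      om R j u = (\<lambda>x. (qj eps j powi mu j) * u x)}"

definition trunc :: "nat list \<Rightarrow> nat \<Rightarrow> 'x rep \<Rightarrow> ('x \<Rightarrow> qf) set" where
  "trunc eps i R = {u. \<exists>M g. finite M \<and> (\<forall>mu\<in>M. mu i = 0 \<and> g mu \<in> weight_space eps R mu)
        \<and> u = (\<lambda>x. \<Sum>mu\<in>M. g mu x)}"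

definition D_const :: "nat list \<Rightarrow> nat \<Rightarrow> qf" where
  "D_const eps i = (qj eps (i - 1) powi pair i (i - 1)) * (qj eps i powi (- pair i i))"

definition phi_rep :: "nat list \<Rightarrow> nat \<Rightarrow> 'x rep \<Rightarrow> 'x rep" where
  "phi_rep eps i R = \<lparr> car = trunc eps i R,
     om = (\<lambda>l. if l < i then om R l else om R (l + 1)),
     ee = (\<lambda>j u. if 2 \<le> i \<and> i \<le> length eps - 1 then
              (if j \<le> i - 2 then ee R j u
               else if j = i - 1 then
                 (\<lambda>x. ee R (i - 1) (ee R i u) x - D_const eps i * ee R i (ee R (i - 1) u) x)
               else ee R (j + 1) u)
            else if i = length eps then ee R j u
            else ee R (j + 1) u),
     ff = (\<lambda>j u. if 2 \<le> i \<and> i \<le> length eps - 1 then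
              (if j \<le> i - 2 then ff R j u
               else if j = i - 1 then
                 (\<lambda>x. ff R i (ff R (i - 1) u) x - inverse (D_const eps i) * ff R (i - 1) (ff R i u) x)
               else ff R (j + 1) u)
            else if i = length eps then ff R j u
            else ff R (j + 1) u) \<rparr>"

definition stable :: "nat \<Rightarrow> 'x rep \<Rightarrow> bool" where
  "stable k R \<longleftrightarrow> (\<forall>u \<in> car R.
      (\<forall>j \<in> {1..k}. om R j u \<in> car R) \<and>
      (\<forall>j \<in> {1..k - 1}. ee R j u \<in> car R \<and> ff R j u \<in> car R))"

definition rep_iso :: "nat \<Rightarrow> 'x rep \<Rightarrow> 'y rep \<Rightarrow> bool" where
  "rep_iso k R S \<longleftrightarrow> (\<exists>T. bij_betw T (car R) (car S) \<and>
      (\<forall>u \<in> car R. \<forall>v \<in> car R. \<forall>a b.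
          T (\<lambda>x. a * u x + b * v x) = (\<lambda>y. a * T u y + b * T v y)) \<and>
      (\<forall>u \<in> car R.
         (\<forall>j \<in> {1..k}. T (om R j u) = om S j (T u)) \<and>
         (\<forall>j \<in> {1..k - 1}. T (ee R j u) = ee S j (T u) \<and> T (ff R j u) = ff S j (T u))))"

end

theory Submission
  imports Defs
begin

lemma finite_words: "finite (words k l)"
proof -
  have "words k l = {w. set w \<subseteq> {1..k} \<and> length w = l}" unfolding words_def by auto
  then show ?thesis using finite_lists_length_eq[of "{1..k}" l] by simp
qed

lemma tensor_op_mono:
  assumes len: "length Ms = L"
    and M: "\<And>r a b. r < L \<Longrightarrow> (Ms ! r) a b = (if b = g r a then c r a else 0)"
    and u: "u \<in> tens_space k L"
  shows "tensor_op k Ms u w = (if w \<in> words k L then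
      (\<Prod>r<L. c r (w ! r)) * u (map (\<lambda>r. g r (w ! r)) [0..<L]) else 0)"
proof (cases "w \<in> words k L")
  case True
  define G where "G = map (\<lambda>r. g r (w ! r)) [0..<L]"
  have lenG: "length G = L" unfolding G_def by simp
  have "(\<Sum>w' \<in> words k L. (\<Prod>p < L. (Ms ! p) (w ! p) (w' ! p)) * u w')
      = (\<Sum>w' \<in> words k L. if w' = G then (\<Prod>r<L. c r (w ! r)) * u G else 0)"
  proof (rule sum.cong[OF refl])
    fix w' assume w': "w' \<in> words k L"
    show "(\<Prod>p < L. (Ms ! p) (w ! p) (w' ! p)) * u w' = (if w' = G then (\<Prod>r<L. c r (w ! r)) * u G else 0)"
    proof (cases "w' = G")
      case True
      then show ?thesis using M by (simp add: G_def)
    next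
      case False
      have "length w' = L" using w' unfolding words_def by simp
      then obtain p where p: "p < L" "w' ! p \<noteq> G ! p" using False lenG nth_equalityI by metis
      then have "(Ms ! p) (w ! p) (w' ! p) = 0" using M[of p] by (simp add: G_def)
      then have "(\<Prod>p < L. (Ms ! p) (w ! p) (w' ! p)) = 0" using p by (intro prod_zero) auto
      then show ?thesis using False by simp
    qed
  qed
  also have "\<dots> = (\<Prod>r<L. c r (w ! r)) * u G"
    using u finite_words[of k L] unfolding tens_space_def by (auto simp: sum.delta)
  finally show ?thesis using True len unfolding tensor_op_def G_def by simp
qed (use len in \<open>simp add: tensor_op_def\<close>)

lemma nth_rep3:
  assumes "r < l" "p < l"
  shows "(replicate p A @ [B] @ replicate (l - p - 1) C) ! r = (if r < p then A else if r = p then B else C)"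
  using assms by (auto simp: nth_append)

lemma nth_rep3':
  assumes "r < l" "p < l"
  shows "(replicate p A @ B # replicate (l - Suc p) C) ! r = (if r < p then A else if r = p then B else C)"
  using nth_rep3[OF assms, of A B C] by simp

lemma len_rep3: "p < l \<Longrightarrow> length (replicate p A @ [B] @ replicate (l - p - 1) C) = l"
  by simp

lemma prod_split3:
  fixes p l :: nat
  assumes "p < l"
  shows "(\<Prod>r<l. if r < p then x r else if r = p then y else z r)
       = (\<Prod>r<p. x r) * y * (\<Prod>r\<in>{p<..<l}. z r)"
proof -
  have "{..<l} = {..<p} \<union> {p} \<union> {p<..<l}" using assms by (auto simp: linorder_not_less)
  then have "(\<Prod>r<l. if r < p then x r else if r = p then y else z r)
     = (\<Prod>r\<in>{..<p} \<union> {p} \<union> {p<..<l}. if r < p then x r else if r = p then y else z r)" by simp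
  also have "\<dots> = (\<Prod>r\<in>{..<p}. if r < p then x r else if r = p then y else z r) *
      (\<Prod>r\<in>{p}. if r < p then x r else if r = p then y else z r) *
      (\<Prod>r\<in>{p<..<l}. if r < p then x r else if r = p then y else z r)"
    by (subst prod.union_disjoint; auto simp: prod.union_disjoint mult_ac)
  also have "\<dots> = (\<Prod>r<p. x r) * y * (\<Prod>r\<in>{p<..<l}. z r)"
    by (intro arg_cong2[where f="(*)"] prod.cong) auto
  finally show ?thesis .
qed

lemma map_upd_eq:
  assumes "length w = l" "p < l"
  shows "map (\<lambda>r. if r = p then f (w ! r) else w ! r) [0..<l] = w[p := f (w ! p)]"
  using assms by (intro nth_equalityI) auto

definition kinvd :: "nat list \<Rightarrow> nat \<Rightarrow> nat \<Rightarrow> qf" where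
  "kinvd eps j b = inverse (om_diag eps j b * inverse (om_diag eps (j + 1) b))"
definition kd :: "nat list \<Rightarrow> nat \<Rightarrow> nat \<Rightarrow> qf" where
  "kd eps j b = om_diag eps j b * inverse (om_diag eps (j + 1) b)"

lemma words_len: "w \<in> words k l \<Longrightarrow> length w = l"
  unfolding words_def by simp

lemma tensor_op_space: "w \<notin> words k (length Ms) \<Longrightarrow> tensor_op k Ms u w = 0"
  unfolding tensor_op_def by simp

lemma tensor_op_zero: "length Ms = l \<Longrightarrow> w \<notin> words k l \<Longrightarrow> tensor_op k Ms u w = 0"
  unfolding tensor_op_def by simp

lemma tens_closed:
  "om (tensrep eps l) j u \<in> tens_space (length eps) l"
  "ee (tensrep eps l) j u \<in> tens_space (length eps) l"
  "ff (tensrep eps l) j u \<in> tens_space (length eps) l"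
  unfolding tens_space_def tensrep_def
  by (auto intro!: sum.neutral tensor_op_zero)

lemma tens_om:
  assumes "u \<in> tens_space (length eps) l"
  shows "om (tensrep eps l) j u w = (if w \<in> words (length eps) l then
           (\<Prod>r<l. om_diag eps j (w ! r)) * u w else 0)"
proof -
  have "om (tensrep eps l) j u w = tensor_op (length eps) (replicate l (om_mat eps j)) u w"
    unfolding tensrep_def by simp
  also have "\<dots> = (if w \<in> words (length eps) l then
      (\<Prod>r<l. om_diag eps j (w ! r)) * u (map (\<lambda>r. w ! r) [0..<l]) else 0)"
    by (rule tensor_op_mono[where g="\<lambda>r a. a"]) (use assms in \<open>auto simp: om_mat_def\<close>)
  also have "\<dots> = (if w \<in> words (length eps) l then
           (\<Prod>r<l. om_diag eps j (w ! r)) * u w else 0)"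
    using words_len map_nth by metis
  finally show ?thesis .
qed

lemma tens_ee:
  assumes "u \<in> tens_space (length eps) l"
  shows "ee (tensrep eps l) j u w = (if w \<in> words (length eps) l then
     (\<Sum>p<l. if w ! p = j then (\<Prod>r<p. kinvd eps j (w ! r)) * u (w[p := Suc j]) else 0) else 0)"
proof -
  have "tensor_op (length eps) (replicate p (kinv_mat eps j) @ [e_mat j] @ replicate (l - p - 1) id_mat) u w
     = (if w \<in> words (length eps) l then
          (if w ! p = j then (\<Prod>r<p. kinvd eps j (w ! r)) * u (w[p := Suc j]) else 0) else 0)"
    if p: "p < l" for p
  proof -
    have "tensor_op (length eps) (replicate p (kinv_mat eps j) @ [e_mat j] @ replicate (l - p - 1) id_mat) u w
      = (if w \<in> words (length eps) l then
      (\<Prod>r<l. (\<lambda>r a. if r < p then kinvd eps j a else if r = p then (if a = j then 1 else 0) else 1) r (w ! r))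
        * u (map (\<lambda>r. (\<lambda>r a. if r = p then Suc a else a) r (w ! r)) [0..<l]) else 0)"
      by (rule tensor_op_mono) (use assms p in \<open>auto simp: nth_rep3' kinv_mat_def kinvd_def e_mat_def id_mat_def\<close>)
    also have "\<dots> = (if w \<in> words (length eps) l then
          (if w ! p = j then (\<Prod>r<p. kinvd eps j (w ! r)) * u (w[p := Suc j]) else 0) else 0)"
    proof (cases "w \<in> words (length eps) l")
      case True
      have "(\<Prod>r<l. (\<lambda>r a. if r < p then kinvd eps j a else if r = p then (if a = j then 1 else 0) else 1) r (w ! r))
          = (\<Prod>r<l. if r < p then kinvd eps j (w ! r) else if r = p then (if w ! p = j then 1 else 0) else 1)"
        by (intro prod.cong) auto
      also have "\<dots> = (\<Prod>r<p. kinvd eps j (w ! r)) * (if w ! p = j then 1 else 0) * (\<Prod>r\<in>{p<..<l}. 1)"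
        by (rule prod_split3[OF p])
      finally have 1: "(\<Prod>r<l. (\<lambda>r a. if r < p then kinvd eps j a else if r = p then (if a = j then 1 else 0) else 1) r (w ! r))
          = (if w ! p = j then (\<Prod>r<p. kinvd eps j (w ! r)) else 0)" by simp
      have 2: "map (\<lambda>r. (\<lambda>r a. if r = p then Suc a else a) r (w ! r)) [0..<l] = w[p := Suc (w ! p)]"
        using map_upd_eq[of w l p Suc] True p words_len by auto
      show ?thesis using True by (simp only: 1 2) auto
    qed simp
    finally show ?thesis .
  qed
  then show ?thesis unfolding tensrep_def by simp
qed

lemma tens_ff:
  assumes "u \<in> tens_space (length eps) l"
  shows "ff (tensrep eps l) j u w = (if w \<in> words (length eps) l then
     (\<Sum>p<l. if w ! p = Suc j then (\<Prod>r\<in>{p<..<l}. kd eps j (w ! r)) * u (w[p := j]) else 0) else 0)"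
proof -
  have "tensor_op (length eps) (replicate p id_mat @ [f_mat j] @ replicate (l - p - 1) (k_mat eps j)) u w
     = (if w \<in> words (length eps) l then
          (if w ! p = Suc j then (\<Prod>r\<in>{p<..<l}. kd eps j (w ! r)) * u (w[p := j]) else 0) else 0)"
    if p: "p < l" for p
  proof -
    have "tensor_op (length eps) (replicate p id_mat @ [f_mat j] @ replicate (l - p - 1) (k_mat eps j)) u w
      = (if w \<in> words (length eps) l then
      (\<Prod>r<l. (\<lambda>r a. if r < p then 1 else if r = p then (if a = Suc j then 1 else 0) else kd eps j a) r (w ! r))
        * u (map (\<lambda>r. (\<lambda>r a. if r = p then a - 1 else a) r (w ! r)) [0..<l]) else 0)"
      by (rule tensor_op_mono) (use assms p in \<open>auto simp: nth_rep3' k_mat_def kd_def f_mat_def id_mat_def\<close>)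
    also have "\<dots> = (if w \<in> words (length eps) l then
          (if w ! p = Suc j then (\<Prod>r\<in>{p<..<l}. kd eps j (w ! r)) * u (w[p := j]) else 0) else 0)"
    proof (cases "w \<in> words (length eps) l")
      case True
      have "(\<Prod>r<l. (\<lambda>r a. if r < p then 1 else if r = p then (if a = Suc j then 1 else 0) else kd eps j a) r (w ! r))
          = (\<Prod>r<l. if r < p then 1 else if r = p then (if w ! p = Suc j then 1 else 0) else kd eps j (w ! r))"
        by (intro prod.cong) auto
      also have "\<dots> = (\<Prod>r<p. 1) * (if w ! p = Suc j then 1 else 0) * (\<Prod>r\<in>{p<..<l}. kd eps j (w ! r))"
        by (rule prod_split3[OF p])
      finally have 1: "(\<Prod>r<l. (\<lambda>r a. if r < p then 1 else if r = p then (if a = Suc j then 1 else 0) else kd eps j a) r (w ! r))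
          = (if w ! p = Suc j then (\<Prod>r\<in>{p<..<l}. kd eps j (w ! r)) else 0)" by simp
      have 2: "map (\<lambda>r. (\<lambda>r a. if r = p then a - 1 else a) r (w ! r)) [0..<l] = w[p := w ! p - 1]"
        using map_upd_eq[of w l p "\<lambda>a. a - 1"] True p words_len by auto
      show ?thesis using True by (simp only: 1 2) auto
    qed simp
    finally show ?thesis .
  qed
  then show ?thesis unfolding tensrep_def by simp
qed


lemma qq_gt1: "1 < qq"
proof -
  have "[:0, 1:] - 1 = ([:-1, 1:] :: rat poly)" by (simp add: one_pCons)
  then have "pos_poly ([:0, 1:] - (1::rat poly))" by (simp add: pos_poly_pCons)
  then show ?thesis unfolding qq_def
  by (subst one_less_Fract_iff[OF zero_less_one]) (simp_all add: less_poly_def)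
qed

lemma qj_pow_ne1: assumes "c > 0" shows "qj eps j ^ c \<noteq> 1"
proof -
  have a: "1 < qq ^ c" using qq_gt1 assms by (simp add: one_less_power)
  have "\<bar>- inverse qq\<bar> ^ c < 1" using qq_gt1 assms
    by (intro power_less_one_iff[THEN iffD2]) (auto simp: inverse_less_1_iff)
  then have "\<bar>(- inverse qq) ^ c\<bar> < 1" by (simp add: power_abs)
  then have "(- inverse qq) ^ c \<noteq> 1" by (metis abs_one order_less_irrefl)
  with a show ?thesis unfolding qj_def by auto
qed

lemma qj_ne1: "qj eps j \<noteq> 1"
  using qj_pow_ne1[of 1] by simp

lemma qj_ne0: "qj eps j \<noteq> 0"
  using qq_gt1 unfolding qj_def by auto

lemma omd_simp: "om_diag eps j b = (if j = b then qj eps j else 1)"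
  unfolding om_diag_def by simp

lemma omd_ne0: "om_diag eps j b \<noteq> 0"
  using qj_ne0 by (simp add: omd_simp)

lemma prod_omd: "(\<Prod>r<l. om_diag eps j (w ! r)) = qj eps j ^ card {r\<in>{..<l}. w ! r = j}"
proof -
  have "(\<Prod>r<l. om_diag eps j (w ! r)) = (\<Prod>r<l. if w ! r = j then qj eps j else 1)"
    by (intro prod.cong) (auto simp: omd_simp)
  also have "\<dots> = (\<Prod>r\<in>{r\<in>{..<l}. w ! r = j}. qj eps j)"
    by (simp add: prod.If_cases Int_def)
  also have "\<dots> = qj eps j ^ card {r\<in>{..<l}. w ! r = j}" by simp
  finally show ?thesis .
qed

definition sh :: "nat \<Rightarrow> nat \<Rightarrow> nat" where
  "sh i b = (if b < i then b else Suc b)"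

lemma sh_inj: "sh i a = sh i b \<longleftrightarrow> a = b"
  unfolding sh_def by auto

lemma sh_ne: "sh i a \<noteq> i"
  unfolding sh_def by auto

lemma nat_om:
  "om (natrep eps) j v a = (if a \<in> {1..length eps} then om_diag eps j a * v a else 0)"
proof -
  have "(\<Sum>b = 1..length eps. om_mat eps j a b * v b) = (\<Sum>b = 1..length eps. if b = a then om_diag eps j a * v a else 0)"
    by (intro sum.cong) (auto simp: om_mat_def)
  then show ?thesis unfolding natrep_def mat_apply_def by simp
qed

lemma nat_ee:
  "ee (natrep eps) j v a = (if a \<in> {1..length eps} \<and> a = j \<and> Suc j \<le> length eps then v (Suc j) else 0)"
proof -
  have "(\<Sum>b = 1..length eps. e_mat j a b * v b) = (\<Sum>b = 1..length eps. if b = Suc j then (if a = j then v (Suc j) else 0) else 0)"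
    by (intro sum.cong) (auto simp: e_mat_def)
  then show ?thesis unfolding natrep_def mat_apply_def by auto
qed

lemma nat_ff:
  "ff (natrep eps) j v a = (if a \<in> {1..length eps} \<and> a = Suc j \<and> j \<in> {1..length eps} then v j else 0)"
proof -
  have "(\<Sum>b = 1..length eps. f_mat j a b * v b) = (\<Sum>b = 1..length eps. if b = j then (if a = Suc j then v j else 0) else 0)"
    by (intro sum.cong) (auto simp: f_mat_def)
  then show ?thesis unfolding natrep_def mat_apply_def by auto
qed

lemma nat_closed:
  "om (natrep eps) j u \<in> nat_space (length eps)"
  "ee (natrep eps) j u \<in> nat_space (length eps)"
  "ff (natrep eps) j u \<in> nat_space (length eps)"
  unfolding nat_space_def by (auto simp: nat_om nat_ee nat_ff split: if_splits)

lemma phi_car: "car (phi_rep eps i R) = trunc eps i R"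
  unfolding phi_rep_def by simp

lemma phi_om: "om (phi_rep eps i R) l = om R (sh i l)"
  unfolding phi_rep_def sh_def by auto

lemma phi_gen:
  assumes "length eps = n" "i \<in> {1..n}" "j \<in> {1..n-2}" "\<not> (2 \<le> i \<and> i \<le> n - 1 \<and> j = i - 1)"
  shows "ee (phi_rep eps i R) j = ee R (sh i j)" "ff (phi_rep eps i R) j = ff R (sh i j)"
    "sh i (Suc j) = Suc (sh i j)"
  using assms unfolding phi_rep_def sh_def by (auto simp: fun_eq_iff)

lemma phi_spec:
  assumes "length eps = n" "2 \<le> i" "i \<le> n - 1"
  shows "ee (phi_rep eps i R) (i - 1) u = (\<lambda>x. ee R (i - 1) (ee R i u) x - D_const eps i * ee R i (ee R (i - 1) u) x)"
    "ff (phi_rep eps i R) (i - 1) u = (\<lambda>x. ff R i (ff R (i - 1) u) x - inverse (D_const eps i) * ff R (i - 1) (ff R i u) x)"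
  using assms unfolding phi_rep_def by auto


locale rmv =
  fixes eps :: "nat list" and i n :: nat
  assumes len: "length eps = n" and i1: "1 \<le> i" and in': "i \<le> n"
begin

abbreviation "eps' \<equiv> remove_entry eps i"

lemma len': "length eps' = n - 1"
  using len i1 in' unfolding remove_entry_def by simp

lemma eps_at': assumes "j \<in> {1..n-1}" shows "eps_at eps' j = eps_at eps (sh i j)"
  using assms len i1 in' unfolding remove_entry_def eps_at_def sh_def
  by (auto simp: nth_append min_def)

lemma qj': "j \<in> {1..n-1} \<Longrightarrow> qj eps' j = qj eps (sh i j)"
  unfolding qj_def by (simp add: eps_at')

lemma omd': "j \<in> {1..n-1} \<Longrightarrow> om_diag eps' j a = om_diag eps (sh i j) (sh i a)"
  by (simp add: omd_simp qj' sh_inj)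

lemma sh_range: "a \<in> {1..n-1} \<Longrightarrow> sh i a \<in> {1..n}"
  using in' unfolding sh_def by auto

definition shinv :: "nat \<Rightarrow> nat" where "shinv b = (if b < i then b else b - 1)"

lemma shinv_sh: "shinv (sh i a) = a"
  unfolding shinv_def sh_def by auto

lemma sh_shinv: "b \<noteq> i \<Longrightarrow> sh i (shinv b) = b"
  unfolding shinv_def sh_def by auto

lemma shinv_range: "b \<in> {1..n} \<Longrightarrow> b \<noteq> i \<Longrightarrow> shinv b \<in> {1..n-1}"
  using i1 in' unfolding shinv_def by auto

lemma kinvd': assumes "j \<in> {1..n-1}" "Suc j \<in> {1..n-1}" "sh i (Suc j) = Suc (sh i j)"
  shows "kinvd eps' j a = kinvd eps (sh i j) (sh i a)"
  using assms unfolding kinvd_def by (simp add: omd')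

lemma kd': assumes "j \<in> {1..n-1}" "Suc j \<in> {1..n-1}" "sh i (Suc j) = Suc (sh i j)"
  shows "kd eps' j a = kd eps (sh i j) (sh i a)"
  using assms unfolding kd_def by (simp add: omd')

lemma kinvd_spec: assumes "2 \<le> i" "i \<le> n - 1"
  shows "kinvd eps (i - 1) (sh i a) * kinvd eps i (sh i a) = kinvd eps' (i - 1) a"
proof -
  have s1: "sh i (i - 1) = i - 1" "sh i i = Suc i" using assms unfolding sh_def by auto
  have o1: "om_diag eps' (i - 1) a = om_diag eps (i - 1) (sh i a)"
  proof -
    have "i - 1 \<in> {1..n-1}" using assms by auto
    from omd'[OF this, of a] show ?thesis using s1 by simp
  qed
  have o2: "om_diag eps' i a = om_diag eps (Suc i) (sh i a)"
    using omd'[of i a] s1 assms by simp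
  have "kinvd eps' (i - 1) a = inverse (om_diag eps (i - 1) (sh i a) * inverse (om_diag eps (Suc i) (sh i a)))"
    unfolding kinvd_def using assms o1 o2 by simp
  then show ?thesis unfolding kinvd_def using assms omd_ne0
    by (simp add: field_simps)
qed

lemma kd_spec: assumes "2 \<le> i" "i \<le> n - 1"
  shows "kd eps i (sh i a) * kd eps (i - 1) (sh i a) = kd eps' (i - 1) a"
proof -
  have s1: "sh i (i - 1) = i - 1" "sh i i = Suc i" using assms unfolding sh_def by auto
  have o1: "om_diag eps' (i - 1) a = om_diag eps (i - 1) (sh i a)"
  proof -
    have "i - 1 \<in> {1..n-1}" using assms by auto
    from omd'[OF this, of a] show ?thesis using s1 by simp
  qed
  have o2: "om_diag eps' i a = om_diag eps (Suc i) (sh i a)"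
    using omd'[of i a] s1 assms by simp
  have "kd eps' (i - 1) a = om_diag eps (i - 1) (sh i a) * inverse (om_diag eps (Suc i) (sh i a))"
    unfolding kd_def using assms o1 o2 by simp
  then show ?thesis unfolding kd_def using assms omd_ne0
    by (simp add: field_simps)
qed

end

lemma weight_fix:
  assumes "g \<in> weight_space eps R mu" "mu i = 0" "i \<in> {1..length eps}"
  shows "om R i g = g" "g \<in> car R"
  using assms unfolding weight_space_def by auto

lemma trunc_nat:
  assumes i: "i \<in> {1..length eps}"
  shows "trunc eps i (natrep eps) = {v \<in> nat_space (length eps). v i = 0}"
proof (intro set_eqI iffI)
  fix u assume "u \<in> trunc eps i (natrep eps)"
  then obtain M g where M: "finite M" "\<forall>mu\<in>M. mu i = 0 \<and> g mu \<in> weight_space eps (natrep eps) mu"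
    and u: "u = (\<lambda>x. \<Sum>mu\<in>M. g mu x)" unfolding trunc_def by blast
  have gs: "g mu \<in> nat_space (length eps)" "g mu i = 0" if "mu \<in> M" for mu
  proof -
    have w: "om (natrep eps) i (g mu) = g mu" "g mu \<in> car (natrep eps)"
      using weight_fix[of "g mu" eps "natrep eps" mu i] M that i by auto
    then show "g mu \<in> nat_space (length eps)" by (simp add: natrep_def)
    have "om (natrep eps) i (g mu) i = qj eps i * g mu i" using i by (simp add: nat_om omd_simp)
    then have "qj eps i * g mu i = 1 * g mu i" using w by simp
    then show "g mu i = 0" using qj_ne1 by (metis mult_cancel_right)
  qed
  have "u \<in> nat_space (length eps)"
    unfolding nat_space_def u
  proof (intro CollectI allI impI)
    fix j assume "(\<Sum>mu\<in>M. g mu j) \<noteq> 0"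
    then obtain mu where "mu \<in> M" "g mu j \<noteq> 0" by (meson sum.neutral)
    then show "j \<in> {1..length eps}" using gs unfolding nat_space_def by blast
  qed
  moreover have "u i = 0" unfolding u using gs by simp
  ultimately show "u \<in> {v \<in> nat_space (length eps). v i = 0}" by simp
next
  fix v assume v: "v \<in> {v \<in> nat_space (length eps). v i = 0}"
  define dl :: "nat \<Rightarrow> nat \<Rightarrow> int" where "dl a = (\<lambda>j. if j = a then 1 else 0)" for a
  have dl_inj: "dl a = dl b \<longleftrightarrow> a = b" for a b unfolding dl_def by (auto simp: fun_eq_iff)
  have dl_app: "dl a j = (if j = a then 1 else 0)" for a j unfolding dl_def by simp
  define M where "M = dl ` ({1..length eps} - {i})"
  define g where "g mu = (\<lambda>a. if a \<in> {1..length eps} \<and> dl a = mu then v a else 0)" for mu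
  have "finite M" unfolding M_def by simp
  moreover have "\<forall>mu\<in>M. mu i = 0 \<and> g mu \<in> weight_space eps (natrep eps) mu"
  proof
    fix mu assume "mu \<in> M"
    then obtain b where b: "b \<in> {1..length eps}" "b \<noteq> i" "mu = dl b" unfolding M_def by blast
    have "mu i = 0" using b unfolding dl_def by auto
    moreover have "g mu \<in> nat_space (length eps)" unfolding g_def nat_space_def by auto
    moreover have "om (natrep eps) j (g mu) = (\<lambda>x. qj eps j powi mu j * g mu x)" for j
    proof
      fix x show "om (natrep eps) j (g mu) x = qj eps j powi mu j * g mu x"
        using b by (auto simp: nat_om g_def omd_simp dl_inj dl_app)
    qed
    ultimately show "mu i = 0 \<and> g mu \<in> weight_space eps (natrep eps) mu"
      unfolding weight_space_def by (simp add: natrep_def)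
  qed
  moreover have "v = (\<lambda>x. \<Sum>mu\<in>M. g mu x)"
  proof
    fix x
    have "(\<Sum>mu\<in>M. g mu x) = (\<Sum>mu\<in>M. if dl x = mu then (if x \<in> {1..length eps} then v x else 0) else 0)"
      unfolding g_def by (intro sum.cong) auto
    also have "\<dots> = (if dl x \<in> M then (if x \<in> {1..length eps} then v x else 0) else 0)"
      using \<open>finite M\<close> by (simp add: sum.delta)
    also have "\<dots> = v x"
      using v unfolding M_def nat_space_def by (auto simp: dl_inj)
    finally show "v x = (\<Sum>mu\<in>M. g mu x)" by simp
  qed
  ultimately show "v \<in> trunc eps i (natrep eps)" unfolding trunc_def by blast
qed


lemma trunc_tens:
  assumes i: "i \<in> {1..length eps}"
  shows "trunc eps i (tensrep eps l) = {u \<in> tens_space (length eps) l. \<forall>w. i \<in> set w \<longrightarrow> u w = 0}"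
proof (intro set_eqI iffI)
  fix u assume "u \<in> trunc eps i (tensrep eps l)"
  then obtain M g where M: "finite M" "\<forall>mu\<in>M. mu i = 0 \<and> g mu \<in> weight_space eps (tensrep eps l) mu"
    and u: "u = (\<lambda>x. \<Sum>mu\<in>M. g mu x)" unfolding trunc_def by blast
  have gs: "g mu \<in> tens_space (length eps) l" "\<And>w. i \<in> set w \<Longrightarrow> g mu w = 0" if "mu \<in> M" for mu
  proof -
    have w: "om (tensrep eps l) i (g mu) = g mu" "g mu \<in> car (tensrep eps l)"
      using weight_fix[of "g mu" eps "tensrep eps l" mu i] M that i by auto
    then show gt: "g mu \<in> tens_space (length eps) l" by (simp add: tensrep_def)
    fix w assume iw: "i \<in> set w"
    show "g mu w = 0"
    proof (cases "w \<in> words (length eps) l")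
      case True
      define c where "c = card {r\<in>{..<l}. w ! r = i}"
      obtain r where r: "r < length w" "w ! r = i" using iw by (metis in_set_conv_nth)
      have "r \<in> {r\<in>{..<l}. w ! r = i}" using r True words_len by auto
      moreover have "finite {r\<in>{..<l}. w ! r = i}" by (rule finite_subset[of _ "{..<l}"]) auto
      ultimately have "c > 0" unfolding c_def by (auto simp: card_gt_0_iff)
      have "om (tensrep eps l) i (g mu) w = qj eps i ^ c * g mu w"
        using True gt by (simp add: tens_om prod_omd c_def)
      then have "qj eps i ^ c * g mu w = 1 * g mu w" using w by simp
      then show ?thesis using qj_pow_ne1[OF \<open>c > 0\<close>] by (metis mult_cancel_right)
    next
      case False then show ?thesis using gt unfolding tens_space_def by auto
    qed
  qed
  have "u \<in> tens_space (length eps) l"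
    unfolding tens_space_def u
  proof (intro CollectI allI impI)
    fix w assume "(\<Sum>mu\<in>M. g mu w) \<noteq> 0"
    then obtain mu where "mu \<in> M" "g mu w \<noteq> 0" by (meson sum.neutral)
    then show "w \<in> words (length eps) l" using gs unfolding tens_space_def by blast
  qed
  moreover have "\<forall>w. i \<in> set w \<longrightarrow> u w = 0" unfolding u using gs by simp
  ultimately show "u \<in> {u \<in> tens_space (length eps) l. \<forall>w. i \<in> set w \<longrightarrow> u w = 0}" by simp
next
  fix v assume v: "v \<in> {u \<in> tens_space (length eps) l. \<forall>w. i \<in> set w \<longrightarrow> u w = 0}"
  define W where "W = words (length eps) l"
  define cv :: "nat list \<Rightarrow> nat \<Rightarrow> int" where "cv w = (\<lambda>j. int (card {r\<in>{..<l}. w ! r = j}))" for w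
  define M where "M = cv ` {w \<in> W. i \<notin> set w}"
  define g where "g mu = (\<lambda>w. if w \<in> W \<and> cv w = mu then v w else 0)" for mu
  have "finite M" unfolding M_def W_def using finite_words by simp
  moreover have "\<forall>mu\<in>M. mu i = 0 \<and> g mu \<in> weight_space eps (tensrep eps l) mu"
  proof
    fix mu assume "mu \<in> M"
    then obtain b where b: "b \<in> W" "i \<notin> set b" "mu = cv b" unfolding M_def by blast
    have "{r\<in>{..<l}. b ! r = i} = {}" using b words_len unfolding W_def by (auto simp: nth_mem)
    then have "mu i = 0" using b unfolding cv_def by simp
    moreover have gt: "g mu \<in> tens_space (length eps) l" unfolding g_def tens_space_def W_def by auto
    moreover have "om (tensrep eps l) j (g mu) = (\<lambda>x. qj eps j powi mu j * g mu x)" for j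
    proof
      fix x
      have e: "om (tensrep eps l) j (g mu) x = (if x \<in> W then (\<Prod>r<l. om_diag eps j (x ! r)) * g mu x else 0)"
        using tens_om[OF gt] unfolding W_def by simp
      show "om (tensrep eps l) j (g mu) x = qj eps j powi mu j * g mu x"
      proof (cases "x \<in> W \<and> cv x = mu")
        case True
        then have "mu j = int (card {r\<in>{..<l}. x ! r = j})" unfolding cv_def by auto
        then show ?thesis using True by (simp only: e prod_omd power_int_of_nat) simp
      next
        case False
        then have "g mu x = 0" unfolding g_def by auto
        then show ?thesis by (simp add: e)
      qed
    qed
    ultimately show "mu i = 0 \<and> g mu \<in> weight_space eps (tensrep eps l) mu"
      unfolding weight_space_def by (simp add: tensrep_def)
  qed
  moreover have "v = (\<lambda>x. \<Sum>mu\<in>M. g mu x)"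
  proof
    fix x
    have "(\<Sum>mu\<in>M. g mu x) = (\<Sum>mu\<in>M. if cv x = mu then (if x \<in> W then v x else 0) else 0)"
      unfolding g_def by (intro sum.cong) auto
    also have "\<dots> = (if cv x \<in> M then (if x \<in> W then v x else 0) else 0)"
      using \<open>finite M\<close> by (simp add: sum.delta)
    also have "\<dots> = v x"
    proof (cases "x \<in> W \<and> i \<notin> set x")
      case True then show ?thesis unfolding M_def by auto
    next
      case False then have "v x = 0" using v unfolding W_def tens_space_def by auto
      then show ?thesis by simp
    qed
    finally show "v x = (\<Sum>mu\<in>M. g mu x)" by simp
  qed
  ultimately show "v \<in> trunc eps i (tensrep eps l)" unfolding trunc_def by blast
qed


lemma sum_single:
  fixes F :: "nat \<Rightarrow> 'a::comm_monoid_add"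
  assumes "p < l" "P p" "\<And>p'. p' < l \<Longrightarrow> p' \<noteq> p \<Longrightarrow> \<not> P p'"
  shows "(\<Sum>p'<l. if P p' then F p' else 0) = F p"
proof -
  have "(\<Sum>p'<l. if P p' then F p' else 0) = (\<Sum>p'<l. if p' = p then F p' else 0)"
    using assms by (intro sum.cong) auto
  also have "\<dots> = F p" using assms by (simp add: sum.delta)
  finally show ?thesis .
qed

context rmv
begin

definition Tt :: "nat \<Rightarrow> (nat list \<Rightarrow> qf) \<Rightarrow> (nat list \<Rightarrow> qf)" where
  "Tt l u = (\<lambda>w'. if w' \<in> words (n - 1) l then u (map (sh i) w') else 0)"

definition St :: "nat \<Rightarrow> (nat list \<Rightarrow> qf) \<Rightarrow> (nat list \<Rightarrow> qf)" where
  "St l u = (\<lambda>w. if w \<in> words n l \<and> i \<notin> set w then u (map shinv w) else 0)"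

lemma map_sh_words: "w' \<in> words (n - 1) l \<Longrightarrow> map (sh i) w' \<in> words n l"
  using sh_range unfolding words_def by auto

lemma map_sh_noti: "i \<notin> set (map (sh i) w')"
  unfolding set_map using sh_ne by (metis imageE)

lemma map_shinv_words: assumes "w \<in> words n l" "i \<notin> set w" shows "map shinv w \<in> words (n - 1) l"
proof -
  have "\<forall>x\<in>set w. shinv x \<in> {1..n-1}" using assms shinv_range unfolding words_def by blast
  then show ?thesis using assms unfolding words_def by auto
qed

lemma shinv_sh_map: "map shinv (map (sh i) w') = w'"
  by (simp add: shinv_sh map_idI)

lemma sh_shinv_map: "i \<notin> set w \<Longrightarrow> map (sh i) (map shinv w) = w"
  by (induction w) (auto simp: sh_shinv)

lemma Trt: "trunc eps i (tensrep eps l) = {u \<in> tens_space n l. \<forall>w. i \<notin> set w \<or> u w = 0}"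
  using trunc_tens[of i eps l] len i1 in' by auto

lemma Tt_space: "(Tt l) u \<in> tens_space (n - 1) l"
  unfolding Tt_def tens_space_def by auto

lemma Tt_bij: "bij_betw (Tt l) (trunc eps i (tensrep eps l)) (tens_space (length eps') l)"
proof (rule bij_betw_byWitness[where f'="St l"])
  show "\<forall>u\<in>trunc eps i (tensrep eps l). (St l) ((Tt l) u) = u"
  proof
    fix u assume "u \<in> trunc eps i (tensrep eps l)"
    then have u: "u \<in> tens_space n l" "\<And>w. i \<in> set w \<Longrightarrow> u w = 0" unfolding Trt by auto
    show "(St l) ((Tt l) u) = u"
    proof
      fix w show "(St l) ((Tt l) u) w = u w"
        using u map_shinv_words sh_shinv_map unfolding St_def Tt_def tens_space_def by auto
    qed
  qed
  show "\<forall>u\<in>tens_space (length eps') l. (Tt l) ((St l) u) = u"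
  proof
    fix u assume "u \<in> tens_space (length eps') l"
    then have u: "u \<in> tens_space (n - 1) l" using len' by simp
    show "(Tt l) ((St l) u) = u"
    proof
      fix w show "(Tt l) ((St l) u) w = u w"
        using u map_sh_words map_sh_noti shinv_sh_map unfolding St_def Tt_def tens_space_def by auto
    qed
  qed
  show "(Tt l) ` trunc eps i (tensrep eps l) \<subseteq> tens_space (length eps') l"
    using Tt_space len' by auto
  show "(St l) ` tens_space (length eps') l \<subseteq> trunc eps i (tensrep eps l)"
    unfolding Trt St_def tens_space_def by (auto split: if_splits)
qed

lemma Tt_eqI:
  assumes "G \<in> tens_space (n - 1) l" "\<And>w'. w' \<in> words (n - 1) l \<Longrightarrow> F (map (sh i) w') = G w'"
  shows "(Tt l) F = G"
  using assms unfolding Tt_def tens_space_def by (auto simp: fun_eq_iff)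

lemma Tt_at: "w' \<in> words (n - 1) l \<Longrightarrow> (Tt l) u w' = u (map (sh i) w')"
  unfolding Tt_def by simp

lemma tens_space': "tens_space (length eps') l = tens_space (n - 1) l"
  using len' by simp

end

lemma upd_words: "w \<in> words k l \<Longrightarrow> a \<in> {1..k} \<Longrightarrow> w[p := a] \<in> words k l"
  unfolding words_def using set_update_subset_insert[of w p a] by auto

context rmv
begin

lemma trunc_u: assumes "u \<in> trunc eps i (tensrep eps l)"
  shows "u \<in> tens_space (length eps) l" "\<And>w. i \<in> set w \<Longrightarrow> u w = 0"
  using assms unfolding Trt len by auto

lemma Ttu_space: "Tt l u \<in> tens_space (length eps') l"
  using Tt_space len' by simp

lemma t_om:
  assumes u: "u \<in> trunc eps i (tensrep eps l)" and j: "j \<in> {1..n-1}"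
  shows "Tt l (om (tensrep eps l) (sh i j) u) = om (tensrep eps' l) j (Tt l u)"
proof (rule Tt_eqI)
  show "om (tensrep eps' l) j (Tt l u) \<in> tens_space (n - 1) l"
    using tens_closed(1)[of eps' l j] len' by simp
  fix w' assume w': "w' \<in> words (n - 1) l"
  have lw: "length w' = l" using w' words_len by auto
  have x: "map (sh i) w' \<in> words (length eps) l" using map_sh_words[OF w'] len by simp
  have "om (tensrep eps l) (sh i j) u (map (sh i) w') = (\<Prod>r<l. om_diag eps (sh i j) (sh i (w' ! r))) * u (map (sh i) w')"
    using tens_om[OF trunc_u(1)[OF u]] x lw by simp
  also have "\<dots> = (\<Prod>r<l. om_diag eps' j (w' ! r)) * Tt l u w'"
    using omd'[OF j] Tt_at[OF w'] by simp
  also have "\<dots> = om (tensrep eps' l) j (Tt l u) w'"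
    using tens_om[OF Ttu_space] w' len' by simp
  finally show "om (tensrep eps l) (sh i j) u (map (sh i) w') = om (tensrep eps' l) j (Tt l u) w'" .
qed

lemma t_ee:
  assumes u: "u \<in> trunc eps i (tensrep eps l)" and j: "j \<in> {1..n-2}"
    and shs: "sh i (Suc j) = Suc (sh i j)"
  shows "Tt l (ee (tensrep eps l) (sh i j) u) = ee (tensrep eps' l) j (Tt l u)"
proof (rule Tt_eqI)
  show "ee (tensrep eps' l) j (Tt l u) \<in> tens_space (n - 1) l"
    using tens_closed(2)[of eps' l j] len' by simp
  fix w' assume w': "w' \<in> words (n - 1) l"
  have lw: "length w' = l" using w' words_len by auto
  have x: "map (sh i) w' \<in> words (length eps) l" using map_sh_words[OF w'] len by simp
  have j1: "j \<in> {1..n-1}" "Suc j \<in> {1..n-1}" using j by auto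
  have "ee (tensrep eps l) (sh i j) u (map (sh i) w') =
     (\<Sum>p<l. if sh i (w' ! p) = sh i j then (\<Prod>r<p. kinvd eps (sh i j) (map (sh i) w' ! r)) * u ((map (sh i) w')[p := Suc (sh i j)]) else 0)"
    using tens_ee[OF trunc_u(1)[OF u]] x lw by simp
  also have "\<dots> = (\<Sum>p<l. if w' ! p = j then (\<Prod>r<p. kinvd eps' j (w' ! r)) * Tt l u (w'[p := Suc j]) else 0)"
  proof (intro sum.cong refl)
    fix p assume p: "p \<in> {..<l}"
    have wu: "w'[p := Suc j] \<in> words (n - 1) l" using upd_words[OF w'] j1 by simp
    have "Tt l u (w'[p := Suc j]) = u ((map (sh i) w')[p := Suc (sh i j)])"
      using Tt_at[OF wu] shs by (simp add: map_update)
    moreover have "(\<Prod>r<p. kinvd eps (sh i j) (map (sh i) w' ! r)) = (\<Prod>r<p. kinvd eps' j (w' ! r))"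
      using kinvd'[OF j1 shs] p lw by (intro prod.cong) auto
    ultimately show "(if sh i (w' ! p) = sh i j then (\<Prod>r<p. kinvd eps (sh i j) (map (sh i) w' ! r)) * u ((map (sh i) w')[p := Suc (sh i j)]) else 0)
      = (if w' ! p = j then (\<Prod>r<p. kinvd eps' j (w' ! r)) * Tt l u (w'[p := Suc j]) else 0)"
      by (simp add: sh_inj)
  qed
  also have "\<dots> = ee (tensrep eps' l) j (Tt l u) w'"
    using tens_ee[OF Ttu_space] w' len' by simp
  finally show "ee (tensrep eps l) (sh i j) u (map (sh i) w') = ee (tensrep eps' l) j (Tt l u) w'" .
qed

lemma t_ff:
  assumes u: "u \<in> trunc eps i (tensrep eps l)" and j: "j \<in> {1..n-2}"
    and shs: "sh i (Suc j) = Suc (sh i j)"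
  shows "Tt l (ff (tensrep eps l) (sh i j) u) = ff (tensrep eps' l) j (Tt l u)"
proof (rule Tt_eqI)
  show "ff (tensrep eps' l) j (Tt l u) \<in> tens_space (n - 1) l"
    using tens_closed(3)[of eps' l j] len' by simp
  fix w' assume w': "w' \<in> words (n - 1) l"
  have lw: "length w' = l" using w' words_len by auto
  have x: "map (sh i) w' \<in> words (length eps) l" using map_sh_words[OF w'] len by simp
  have j1: "j \<in> {1..n-1}" "Suc j \<in> {1..n-1}" using j by auto
  have "ff (tensrep eps l) (sh i j) u (map (sh i) w') =
     (\<Sum>p<l. if sh i (w' ! p) = Suc (sh i j) then (\<Prod>r\<in>{p<..<l}. kd eps (sh i j) (map (sh i) w' ! r)) * u ((map (sh i) w')[p := sh i j]) else 0)"
    using tens_ff[OF trunc_u(1)[OF u]] x lw by simp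
  also have "\<dots> = (\<Sum>p<l. if w' ! p = Suc j then (\<Prod>r\<in>{p<..<l}. kd eps' j (w' ! r)) * Tt l u (w'[p := j]) else 0)"
  proof (intro sum.cong refl)
    fix p assume p: "p \<in> {..<l}"
    have wu: "w'[p := j] \<in> words (n - 1) l" using upd_words[OF w'] j1 by simp
    have "Tt l u (w'[p := j]) = u ((map (sh i) w')[p := sh i j])"
      using Tt_at[OF wu] by (simp add: map_update)
    moreover have "(\<Prod>r\<in>{p<..<l}. kd eps (sh i j) (map (sh i) w' ! r)) = (\<Prod>r\<in>{p<..<l}. kd eps' j (w' ! r))"
      using kd'[OF j1 shs] p lw by (intro prod.cong) auto
    moreover have "sh i (w' ! p) = Suc (sh i j) \<longleftrightarrow> w' ! p = Suc j"
      using shs sh_inj by metis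
    ultimately show "(if sh i (w' ! p) = Suc (sh i j) then (\<Prod>r\<in>{p<..<l}. kd eps (sh i j) (map (sh i) w' ! r)) * u ((map (sh i) w')[p := sh i j]) else 0)
      = (if w' ! p = Suc j then (\<Prod>r\<in>{p<..<l}. kd eps' j (w' ! r)) * Tt l u (w'[p := j]) else 0)"
      by simp
  qed
  also have "\<dots> = ff (tensrep eps' l) j (Tt l u) w'"
    using tens_ff[OF Ttu_space] w' len' by simp
  finally show "ff (tensrep eps l) (sh i j) u (map (sh i) w') = ff (tensrep eps' l) j (Tt l u) w'" .
qed


lemma t_ee_spec:
  assumes u: "u \<in> trunc eps i (tensrep eps l)" and i2: "2 \<le> i" "i \<le> n - 1"
  shows "Tt l (ee (phi_rep eps i (tensrep eps l)) (i - 1) u) = ee (tensrep eps' l) (i - 1) (Tt l u)"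
proof -
  let ?R = "tensrep eps l"
  have us: "u \<in> tens_space (length eps) l" using trunc_u[OF u] by simp
  have sh1: "sh i (i - 1) = i - 1" "sh i i = Suc i" using i2 unfolding sh_def by auto
  have si: "Suc (i - 1) = i" using i2 by simp
  have "Tt l (\<lambda>x. ee ?R (i - 1) (ee ?R i u) x - D_const eps i * ee ?R i (ee ?R (i - 1) u) x)
      = ee (tensrep eps' l) (i - 1) (Tt l u)"
  proof (rule Tt_eqI)
    show "ee (tensrep eps' l) (i - 1) (Tt l u) \<in> tens_space (n - 1) l"
      using tens_closed(2)[of eps' l "i - 1"] len' by simp
    fix w' assume w': "w' \<in> words (n - 1) l"
    define x where "x = map (sh i) w'"
    have lw: "length w' = l" using w' words_len by auto
    have lx: "length x = l" using lw x_def by simp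
    have xw: "x \<in> words (length eps) l" using map_sh_words[OF w'] len x_def by simp
    have xi: "p < l \<Longrightarrow> x ! p \<noteq> i" for p using lw sh_ne unfolding x_def by simp
    have A: "ee ?R i (ee ?R (i - 1) u) x = 0"
      using tens_ee[OF tens_closed(2)[of eps l "i - 1" u], of i x] xw xi by simp
    have B: "ee ?R (i - 1) (ee ?R i u) x =
      (\<Sum>p<l. if x ! p = i - 1 then (\<Prod>r<p. kinvd eps (i - 1) (x ! r)) * ee ?R i u (x[p := i]) else 0)"
      using tens_ee[OF tens_closed(2)[of eps l i u], of "i - 1" x, unfolded si] xw by simp
    also have "\<dots> = (\<Sum>p<l. if w' ! p = i - 1 then (\<Prod>r<p. kinvd eps' (i - 1) (w' ! r)) * Tt l u (w'[p := i]) else 0)"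
    proof (intro sum.cong refl)
      fix p assume p: "p \<in> {..<l}"
      show "(if x ! p = i - 1 then (\<Prod>r<p. kinvd eps (i - 1) (x ! r)) * ee ?R i u (x[p := i]) else 0)
          = (if w' ! p = i - 1 then (\<Prod>r<p. kinvd eps' (i - 1) (w' ! r)) * Tt l u (w'[p := i]) else 0)"
      proof (cases "w' ! p = i - 1")
        case True
        have xp: "x ! p = i - 1" using True p lw sh1 unfolding x_def by simp
        have xu: "x[p := i] \<in> words (length eps) l" using upd_words[OF xw] i2 len by simp
        have "ee ?R i u (x[p := i]) = (\<Sum>p'<l. if x[p := i] ! p' = i then
            (\<Prod>r<p'. kinvd eps i (x[p := i] ! r)) * u ((x[p := i])[p' := Suc i]) else 0)"
          using tens_ee[OF us, of i "x[p := i]"] xu by simp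
        also have "\<dots> = (\<Prod>r<p. kinvd eps i (x[p := i] ! r)) * u ((x[p := i])[p := Suc i])"
          by (rule sum_single) (use p lx xi in auto)
        also have "\<dots> = (\<Prod>r<p. kinvd eps i (x ! r)) * u (x[p := Suc i])"
          by (simp)
        finally have e1: "ee ?R i u (x[p := i]) = (\<Prod>r<p. kinvd eps i (x ! r)) * u (x[p := Suc i])" .
        have wu: "w'[p := i] \<in> words (n - 1) l" by (rule upd_words[OF w']) (use i2 in auto)
        have e2: "Tt l u (w'[p := i]) = u (x[p := Suc i])"
          using Tt_at[OF wu] sh1 unfolding x_def by (simp add: map_update)
        have e3: "(\<Prod>r<p. kinvd eps (i - 1) (x ! r)) * (\<Prod>r<p. kinvd eps i (x ! r))
            = (\<Prod>r<p. kinvd eps' (i - 1) (w' ! r))"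
          unfolding prod.distrib[symmetric]
          using kinvd_spec[OF i2] p lw unfolding x_def by (intro prod.cong) auto
        show ?thesis using True xp e1 e2 e3[symmetric] by (simp add: mult_ac)
      next
        case False
        have "x ! p \<noteq> i - 1" using False p lw sh1 sh_inj unfolding x_def by (metis nth_map lessThan_iff)
        then show ?thesis using False by simp
      qed
    qed
    also have "\<dots> = ee (tensrep eps' l) (i - 1) (Tt l u) w'"
      using tens_ee[OF Ttu_space[of l u], of "i - 1" w', unfolded si] w' len' by simp
    finally show "(\<lambda>x. ee ?R (i - 1) (ee ?R i u) x - D_const eps i * ee ?R i (ee ?R (i - 1) u) x) (map (sh i) w')
       = ee (tensrep eps' l) (i - 1) (Tt l u) w'"
      using A unfolding x_def by simp
  qed
  then show ?thesis unfolding phi_spec(1)[OF len i2] .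
qed

lemma t_ff_spec:
  assumes u: "u \<in> trunc eps i (tensrep eps l)" and i2: "2 \<le> i" "i \<le> n - 1"
  shows "Tt l (ff (phi_rep eps i (tensrep eps l)) (i - 1) u) = ff (tensrep eps' l) (i - 1) (Tt l u)"
proof -
  let ?R = "tensrep eps l"
  have us: "u \<in> tens_space (length eps) l" using trunc_u[OF u] by simp
  have sh1: "sh i (i - 1) = i - 1" "sh i i = Suc i" using i2 unfolding sh_def by auto
  have si: "Suc (i - 1) = i" using i2 by simp
  have "Tt l (\<lambda>x. ff ?R i (ff ?R (i - 1) u) x - inverse (D_const eps i) * ff ?R (i - 1) (ff ?R i u) x)
      = ff (tensrep eps' l) (i - 1) (Tt l u)"
  proof (rule Tt_eqI)
    show "ff (tensrep eps' l) (i - 1) (Tt l u) \<in> tens_space (n - 1) l"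
      using tens_closed(3)[of eps' l "i - 1"] len' by simp
    fix w' assume w': "w' \<in> words (n - 1) l"
    define x where "x = map (sh i) w'"
    have lw: "length w' = l" using w' words_len by auto
    have lx: "length x = l" using lw x_def by simp
    have xw: "x \<in> words (length eps) l" using map_sh_words[OF w'] len x_def by simp
    have xi: "p < l \<Longrightarrow> x ! p \<noteq> i" for p using lw sh_ne unfolding x_def by simp
    have A: "ff ?R (i - 1) (ff ?R i u) x = 0"
      using tens_ff[OF tens_closed(3)[of eps l i u], of "i - 1" x] xw xi i2 by simp
    have B: "ff ?R i (ff ?R (i - 1) u) x =
      (\<Sum>p<l. if x ! p = Suc i then (\<Prod>r\<in>{p<..<l}. kd eps i (x ! r)) * ff ?R (i - 1) u (x[p := i]) else 0)"
      using tens_ff[OF tens_closed(3)[of eps l "i - 1" u], of i x] xw i2 by simp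
    also have "\<dots> = (\<Sum>p<l. if w' ! p = Suc (i - 1) then (\<Prod>r\<in>{p<..<l}. kd eps' (i - 1) (w' ! r)) * Tt l u (w'[p := i - 1]) else 0)"
    proof (intro sum.cong refl)
      fix p assume p: "p \<in> {..<l}"
      show "(if x ! p = Suc i then (\<Prod>r\<in>{p<..<l}. kd eps i (x ! r)) * ff ?R (i - 1) u (x[p := i]) else 0)
          = (if w' ! p = Suc (i - 1) then (\<Prod>r\<in>{p<..<l}. kd eps' (i - 1) (w' ! r)) * Tt l u (w'[p := i - 1]) else 0)"
      proof (cases "w' ! p = i")
        case True
        have xp: "x ! p = Suc i" using True p lw sh1 unfolding x_def by simp
        have xu: "x[p := i] \<in> words (length eps) l" using upd_words[OF xw] i2 len by simp
        have "ff ?R (i - 1) u (x[p := i]) = (\<Sum>q<l. if x[p := i] ! q = Suc (i - 1) then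
            (\<Prod>r\<in>{q<..<l}. kd eps (i - 1) (x[p := i] ! r)) * u ((x[p := i])[q := i - 1]) else 0)"
          using tens_ff[OF us, of "i - 1" "x[p := i]"] xu by simp
        also have "\<dots> = (\<Prod>r\<in>{p<..<l}. kd eps (i - 1) (x[p := i] ! r)) * u ((x[p := i])[p := i - 1])"
          by (rule sum_single) (use p lx xi i2 in auto)
        also have "\<dots> = (\<Prod>r\<in>{p<..<l}. kd eps (i - 1) (x ! r)) * u (x[p := i - 1])"
          by (simp)
        finally have e1: "ff ?R (i - 1) u (x[p := i]) = (\<Prod>r\<in>{p<..<l}. kd eps (i - 1) (x ! r)) * u (x[p := i - 1])" .
        have wu: "w'[p := i - 1] \<in> words (n - 1) l" by (rule upd_words[OF w']) (use i2 in auto)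
        have e2: "Tt l u (w'[p := i - 1]) = u (x[p := i - 1])"
          using Tt_at[OF wu] sh1 unfolding x_def by (simp add: map_update)
        have e3: "(\<Prod>r\<in>{p<..<l}. kd eps i (x ! r)) * (\<Prod>r\<in>{p<..<l}. kd eps (i - 1) (x ! r))
            = (\<Prod>r\<in>{p<..<l}. kd eps' (i - 1) (w' ! r))"
          unfolding prod.distrib[symmetric]
          using kd_spec[OF i2] p lw unfolding x_def by (intro prod.cong) auto
        have "Suc (i - 1) = i" using i2 by simp
        then show ?thesis using True xp e1 e2 e3[symmetric] by (simp add: mult_ac)
      next
        case False
        have "x ! p \<noteq> Suc i" using False p lw sh1 sh_inj unfolding x_def by (metis nth_map lessThan_iff)
        moreover have "Suc (i - 1) = i" using i2 by simp
        ultimately show ?thesis using False by simp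
      qed
    qed
    also have "\<dots> = ff (tensrep eps' l) (i - 1) (Tt l u) w'"
      using tens_ff[OF Ttu_space[of l u], of "i - 1" w'] w' len' i2 by simp
    finally show "(\<lambda>x. ff ?R i (ff ?R (i - 1) u) x - inverse (D_const eps i) * ff ?R (i - 1) (ff ?R i u) x) (map (sh i) w')
       = ff (tensrep eps' l) (i - 1) (Tt l u) w'"
      using A unfolding x_def by simp
  qed
  then show ?thesis unfolding phi_spec(2)[OF len i2] .
qed

end

context rmv
begin

definition Tn :: "(nat \<Rightarrow> qf) \<Rightarrow> (nat \<Rightarrow> qf)" where
  "Tn v = (\<lambda>a. if a \<in> {1..n-1} then v (sh i a) else 0)"

definition Sn :: "(nat \<Rightarrow> qf) \<Rightarrow> (nat \<Rightarrow> qf)" where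
  "Sn v = (\<lambda>a. if a \<in> {1..n} \<and> a \<noteq> i then v (shinv a) else 0)"

lemma Trn: "trunc eps i (natrep eps) = {v \<in> nat_space n. v i = 0}"
  using trunc_nat[of i eps] len i1 in' by auto

lemma Tn_bij: "bij_betw Tn (trunc eps i (natrep eps)) (nat_space (length eps'))"
proof (rule bij_betw_byWitness[where f'=Sn])
  show "\<forall>v\<in>trunc eps i (natrep eps). Sn (Tn v) = v"
  proof
    fix v assume "v \<in> trunc eps i (natrep eps)"
    then have v: "v \<in> nat_space n" "v i = 0" unfolding Trn by auto
    show "Sn (Tn v) = v"
    proof
      fix a show "Sn (Tn v) a = v a"
        using v shinv_range sh_shinv unfolding Sn_def Tn_def nat_space_def by auto
    qed
  qed
  show "\<forall>v\<in>nat_space (length eps'). Tn (Sn v) = v"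
  proof
    fix v assume "v \<in> nat_space (length eps')"
    then have v: "v \<in> nat_space (n - 1)" using len' by simp
    show "Tn (Sn v) = v"
    proof
      fix a show "Tn (Sn v) a = v a"
        using v sh_range sh_ne shinv_sh unfolding Sn_def Tn_def nat_space_def by auto
    qed
  qed
  show "Tn ` trunc eps i (natrep eps) \<subseteq> nat_space (length eps')"
    using len' unfolding Tn_def nat_space_def by (auto split: if_splits)
  show "Sn ` nat_space (length eps') \<subseteq> trunc eps i (natrep eps)"
    unfolding Trn Sn_def nat_space_def by auto
qed

lemma trunc_v: assumes "v \<in> trunc eps i (natrep eps)" shows "v \<in> nat_space n" "v i = 0"
  using assms unfolding Trn by auto

lemma n_om:
  assumes j: "j \<in> {1..n-1}"
  shows "Tn (om (natrep eps) (sh i j) v) = om (natrep eps') j (Tn v)"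
proof
  fix a show "Tn (om (natrep eps) (sh i j) v) a = om (natrep eps') j (Tn v) a"
    using sh_range[of a] omd'[OF j, of a] len len' unfolding Tn_def by (auto simp: nat_om)
qed

lemma n_ee:
  assumes j: "j \<in> {1..n-2}" and shs: "sh i (Suc j) = Suc (sh i j)"
  shows "Tn (ee (natrep eps) (sh i j) v) = ee (natrep eps') j (Tn v)"
proof
  fix a
  have r: "sh i (Suc j) \<in> {1..n}" using sh_range[of "Suc j"] j by auto
  show "Tn (ee (natrep eps) (sh i j) v) a = ee (natrep eps') j (Tn v) a"
    using sh_range[of a] len len' j r shs unfolding Tn_def by (auto simp: nat_ee sh_inj)
qed

lemma n_ff:
  assumes j: "j \<in> {1..n-2}" and shs: "sh i (Suc j) = Suc (sh i j)"
  shows "Tn (ff (natrep eps) (sh i j) v) = ff (natrep eps') j (Tn v)"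
proof
  fix a
  have r: "sh i j \<in> {1..n}" using sh_range[of j] j by auto
  have e: "sh i a = Suc (sh i j) \<longleftrightarrow> a = Suc j" using shs sh_inj by metis
  show "Tn (ff (natrep eps) (sh i j) v) a = ff (natrep eps') j (Tn v) a"
    using sh_range[of a] len len' j r e unfolding Tn_def by (auto simp: nat_ff)
qed

lemma n_ee_spec:
  assumes i2: "2 \<le> i" "i \<le> n - 1"
  shows "Tn (ee (phi_rep eps i (natrep eps)) (i - 1) v) = ee (natrep eps') (i - 1) (Tn v)"
proof -
  have sh1: "sh i (i - 1) = i - 1" "sh i i = Suc i" using i2 unfolding sh_def by auto
  have "Tn (\<lambda>x. ee (natrep eps) (i - 1) (ee (natrep eps) i v) x - D_const eps i * ee (natrep eps) i (ee (natrep eps) (i - 1) v) x)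
     = ee (natrep eps') (i - 1) (Tn v)"
  proof
    fix a
    have e: "sh i a = i - 1 \<longleftrightarrow> a = i - 1" using sh1 sh_inj by metis
    show "Tn (\<lambda>x. ee (natrep eps) (i - 1) (ee (natrep eps) i v) x - D_const eps i * ee (natrep eps) i (ee (natrep eps) (i - 1) v) x) a
      = ee (natrep eps') (i - 1) (Tn v) a"
      using sh_range[of a] len len' i2 e sh1 unfolding Tn_def by (auto simp: nat_ee)
  qed
  then show ?thesis unfolding phi_spec(1)[OF len i2] .
qed

lemma n_ff_spec:
  assumes i2: "2 \<le> i" "i \<le> n - 1"
  shows "Tn (ff (phi_rep eps i (natrep eps)) (i - 1) v) = ff (natrep eps') (i - 1) (Tn v)"
proof -
  have sh1: "sh i (i - 1) = i - 1" "sh i i = Suc i" using i2 unfolding sh_def by auto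
  have "Tn (\<lambda>x. ff (natrep eps) i (ff (natrep eps) (i - 1) v) x - inverse (D_const eps i) * ff (natrep eps) (i - 1) (ff (natrep eps) i v) x)
     = ff (natrep eps') (i - 1) (Tn v)"
  proof
    fix a
    have e: "sh i a = Suc i \<longleftrightarrow> a = i" using sh1 sh_inj by metis
    show "Tn (\<lambda>x. ff (natrep eps) i (ff (natrep eps) (i - 1) v) x - inverse (D_const eps i) * ff (natrep eps) (i - 1) (ff (natrep eps) i v) x) a
      = ff (natrep eps') (i - 1) (Tn v) a"
      using sh_range[of a] len len' i2 e sh1 unfolding Tn_def by (auto simp: nat_ff)
  qed
  then show ?thesis unfolding phi_spec(2)[OF len i2] .
qed

end

lemma nat_space_diff:
  assumes "A \<in> nat_space k" "B \<in> nat_space k"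
  shows "(\<lambda>x. A x - c * B x) \<in> nat_space k"
  unfolding nat_space_def
proof (intro CollectI allI impI)
  fix x assume h: "A x - c * B x \<noteq> 0"
  show "x \<in> {1..k}"
  proof (rule ccontr)
    assume "x \<notin> {1..k}"
    then have "A x = 0" "B x = 0" using assms unfolding nat_space_def by auto
    then show False using h by simp
  qed
qed

context rmv
begin

lemma cases_j:
  assumes "j \<in> {1..n-2}"
  obtains (spec) "2 \<le> i" "i \<le> n - 1" "j = i - 1"
    | (gen) "\<not> (2 \<le> i \<and> i \<le> n - 1 \<and> j = i - 1)"
  by blast

lemma iin: "i \<in> {1..n}" using i1 in' by auto

lemma stable_nat: "stable (n - 1) (phi_rep eps i (natrep eps))"
  unfolding stable_def phi_car Trn
proof (intro ballI conjI)
  fix v assume v: "v \<in> {v \<in> nat_space n. v i = 0}"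
  have vs: "v \<in> nat_space (length eps)" "v i = 0" using v len by auto
  have ns: "\<And>w. w \<in> nat_space (length eps) \<Longrightarrow> w \<in> nat_space n" using len by simp
  {
    fix j :: nat
    show "om (phi_rep eps i (natrep eps)) j v \<in> {v \<in> nat_space n. v i = 0}"
      unfolding phi_om using nat_closed(1) ns vs by (simp add: nat_om)
  }
  {
    fix j assume j: "j \<in> {1..n - 1 - 1}"
    then have j2: "j \<in> {1..n-2}" by (simp add: numeral_2_eq_2)
    show "ee (phi_rep eps i (natrep eps)) j v \<in> {v \<in> nat_space n. v i = 0}"
    proof (cases "2 \<le> i \<and> i \<le> n - 1 \<and> j = i - 1")
      case True
      then have spec: "2 \<le> i" "i \<le> n - 1" "j = i - 1" by auto
      have "ee (natrep eps) (i - 1) (ee (natrep eps) i v) i = 0" "ee (natrep eps) i (ee (natrep eps) (i - 1) v) i = 0"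
        using spec by (auto simp: nat_ee)
      moreover have "(\<lambda>x. ee (natrep eps) (i - 1) (ee (natrep eps) i v) x - D_const eps i * ee (natrep eps) i (ee (natrep eps) (i - 1) v) x) \<in> nat_space n"
        using nat_space_diff[OF nat_closed(2)[of eps "i - 1"] nat_closed(2)[of eps i]] len by simp
      ultimately show ?thesis unfolding spec(3) phi_spec(1)[OF len spec(1,2)] by simp
    next
      case False
    note gen = False
      note g = phi_gen[OF len iin j2 gen] 
      have "ee (natrep eps) (sh i j) v i = 0" using sh_ne[of i j] by (auto simp: nat_ee)
      then show ?thesis unfolding g(1) using nat_closed(2)[of eps "sh i j" v] len by simp
    qed
    show "ff (phi_rep eps i (natrep eps)) j v \<in> {v \<in> nat_space n. v i = 0}"
    proof (cases "2 \<le> i \<and> i \<le> n - 1 \<and> j = i - 1")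
      case True
      then have spec: "2 \<le> i" "i \<le> n - 1" "j = i - 1" by auto
      have "ff (natrep eps) i (ff (natrep eps) (i - 1) v) i = 0" "ff (natrep eps) (i - 1) (ff (natrep eps) i v) i = 0"
        using spec by (auto simp: nat_ff)
      moreover have "(\<lambda>x. ff (natrep eps) i (ff (natrep eps) (i - 1) v) x - inverse (D_const eps i) * ff (natrep eps) (i - 1) (ff (natrep eps) i v) x) \<in> nat_space n"
        using nat_space_diff[OF nat_closed(3)[of eps i] nat_closed(3)[of eps "i - 1"]] len by simp
      ultimately show ?thesis unfolding spec(3) phi_spec(2)[OF len spec(1,2)] by simp
    next
      case False
    note gen = False
      note g = phi_gen[OF len iin j2 gen] 
      have "Suc (sh i j) \<noteq> i" using g(3) sh_ne by (metis i1 in' atLeastAtMost_iff)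
      then have "ff (natrep eps) (sh i j) v i = 0" by (auto simp: nat_ff)
      then show ?thesis unfolding g(2) using nat_closed(3)[of eps "sh i j" v] len by simp
    qed
  }
qed

lemma iso_nat: "rep_iso (n - 1) (phi_rep eps i (natrep eps)) (natrep eps')"
  unfolding rep_iso_def
proof (intro exI[of _ Tn] conjI ballI allI)
  show "bij_betw Tn (car (phi_rep eps i (natrep eps))) (car (natrep eps'))"
    using Tn_bij by (simp add: phi_car natrep_def)
  fix u v a b
  show "Tn (\<lambda>x. a * u x + b * v x) = (\<lambda>y. a * Tn u y + b * Tn v y)"
    unfolding Tn_def by auto
next
  fix u j assume j: "j \<in> {1..n-1}"
  show "Tn (om (phi_rep eps i (natrep eps)) j u) = om (natrep eps') j (Tn u)"
    unfolding phi_om by (rule n_om[OF j])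
next
  fix u j assume j: "j \<in> {1..n - 1 - 1}"
  then have j2: "j \<in> {1..n-2}" by (simp add: numeral_2_eq_2)
  show "Tn (ee (phi_rep eps i (natrep eps)) j u) = ee (natrep eps') j (Tn u)"
  proof (cases "2 \<le> i \<and> i \<le> n - 1 \<and> j = i - 1")
    case True
    then have spec: "2 \<le> i" "i \<le> n - 1" "j = i - 1" by auto
    then show ?thesis using n_ee_spec[OF spec(1,2)] by simp
  next
    case False
    note gen = False
    note g = phi_gen[OF len iin j2 gen] 
    show ?thesis unfolding g(1) by (rule n_ee[OF j2 g(3)])
  qed
  show "Tn (ff (phi_rep eps i (natrep eps)) j u) = ff (natrep eps') j (Tn u)"
  proof (cases "2 \<le> i \<and> i \<le> n - 1 \<and> j = i - 1")
    case True
    then have spec: "2 \<le> i" "i \<le> n - 1" "j = i - 1" by auto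
    then show ?thesis using n_ff_spec[OF spec(1,2)] by simp
  next
    case False
    note gen = False
    note g = phi_gen[OF len iin j2 gen] 
    show ?thesis unfolding g(2) by (rule n_ff[OF j2 g(3)])
  qed
qed

lemma iso_tens: "rep_iso (n - 1) (phi_rep eps i (tensrep eps l)) (tensrep eps' l)"
  unfolding rep_iso_def
proof (intro exI[of _ "Tt l"] conjI ballI allI)
  show "bij_betw (Tt l) (car (phi_rep eps i (tensrep eps l))) (car (tensrep eps' l))"
    using Tt_bij by (simp add: phi_car tensrep_def)
  fix u v a b
  show "Tt l (\<lambda>x. a * u x + b * v x) = (\<lambda>y. a * Tt l u y + b * Tt l v y)"
    unfolding Tt_def by auto
next
  fix u j assume u: "u \<in> car (phi_rep eps i (tensrep eps l))" and j: "j \<in> {1..n-1}"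
  then have u': "u \<in> trunc eps i (tensrep eps l)" by (simp add: phi_car)
  show "Tt l (om (phi_rep eps i (tensrep eps l)) j u) = om (tensrep eps' l) j (Tt l u)"
    unfolding phi_om by (rule t_om[OF u' j])
next
  fix u j assume u: "u \<in> car (phi_rep eps i (tensrep eps l))" and j: "j \<in> {1..n - 1 - 1}"
  then have u': "u \<in> trunc eps i (tensrep eps l)" by (simp add: phi_car)
  from j have j2: "j \<in> {1..n-2}" by (simp add: numeral_2_eq_2)
  show "Tt l (ee (phi_rep eps i (tensrep eps l)) j u) = ee (tensrep eps' l) j (Tt l u)"
  proof (cases "2 \<le> i \<and> i \<le> n - 1 \<and> j = i - 1")
    case True
    then have spec: "2 \<le> i" "i \<le> n - 1" "j = i - 1" by auto
    then show ?thesis using t_ee_spec[OF u' spec(1,2)] by simp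
  next
    case False
    note gen = False
    note g = phi_gen[OF len iin j2 gen] 
    show ?thesis unfolding g(1) by (rule t_ee[OF u' j2 g(3)])
  qed
  show "Tt l (ff (phi_rep eps i (tensrep eps l)) j u) = ff (tensrep eps' l) j (Tt l u)"
  proof (cases "2 \<le> i \<and> i \<le> n - 1 \<and> j = i - 1")
    case True
    then have spec: "2 \<le> i" "i \<le> n - 1" "j = i - 1" by auto
    then show ?thesis using t_ff_spec[OF u' spec(1,2)] by simp
  next
    case False
    note gen = False
    note g = phi_gen[OF len iin j2 gen] 
    show ?thesis unfolding g(2) by (rule t_ff[OF u' j2 g(3)])
  qed
qed

end

theorem lemma4p4:
  fixes eps :: "nat list" and n i :: nat
  assumes "n \<ge> 4" and "length eps = n" and "valid_eps eps"
    and "i \<in> {1..n}"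
    and "n = 4 \<longrightarrow> homogeneous (remove_entry eps i)"
  shows "stable (n - 1) (phi_rep eps i (natrep eps))
       \<and> rep_iso (n - 1) (phi_rep eps i (natrep eps)) (natrep (remove_entry eps i))
       \<and> (\<forall>l \<ge> 1. rep_iso (n - 1) (phi_rep eps i (tensrep eps l))
                                   (tensrep (remove_entry eps i) l))"
proof -
  interpret rmv eps i n using assms by unfold_locales auto
  show ?thesis using stable_nat iso_nat iso_tens by blast
qed


end
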